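(* Each of the eleven sets $A,B,C,D,E,F,G,H,I,J,K$ is uncountable.
   Context: $\Sigma=\{0,1\}$. An overlap is a word $axaxa$ with $a\in\Sigma$, $x\in\Sigma^*$; a word is overlap-free if it has no overlap as a factor. $\mathcal{O}$ is the set of right-infinite binary overlap-free words. Subsets of $\Sigma^\omega$: $A=\mathcal{O}$; $B=\{\mathbf{x}: 1\mathbf{x}\in\mathcal{O}\}$; $C=\{\mathbf{x}: 1\mathbf{x}\in\mathcal{O}$ and $\mathbf{x}$ begins with $101\}$; $D=\{\mathbf{x}: 0\mathbf{x}\in\mathcal{O}\}$; $E=\{\mathbf{x}: 0\mathbf{x}\in\mathcal{O}$ and $\mathbf{x}$ begins with $010\}$; $F=\{\mathbf{x}: 0\mathbf{x}\in\mathcal{O}$ and $\mathbf{x}$ begins with $11\}$; $G=\{\mathbf{x}: 0\mathbf{x}\in\mathcal{O}$ and $\mathbf{x}$ begins with $1\}$; $H=\{\mathbf{x}: 1\mathbf{x}\in\mathcal{O}$ and $\mathbf{x}$ begins with $1\}$; $I=\{\mathbf{x}: 1\mathbf{x}\in\mathcal{O}$ and $\mathbf{x}$ begins with $00\}$; $J=\{\mathbf{x}: 1\mathbf{x}\in\mathcal{O}$ and $\mathbf{x}$ begins with $0\}$; $K=\{\mathbf{x}: 0\mathbf{x}\in\mathcal{O}$ and $\mathbf{x}$ begins with $0\}$. *)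

theory Defs
  imports Main "HOL-Library.Countable_Set"
begin

text \<open>Binary alphabet {0,1} encoded as bool: False = 0, True = 1.
  Finite words are lists, right-infinite words are functions nat \<Rightarrow> bool.\<close>

type_synonym iword = "nat \<Rightarrow> bool"

definition is_overlap :: "bool list \<Rightarrow> bool" where
  "is_overlap u \<longleftrightarrow> (\<exists>a x. u = [a] @ x @ [a] @ x @ [a])"

definition factor_of :: "bool list \<Rightarrow> iword \<Rightarrow> bool" where
  "factor_of u w \<longleftrightarrow> (\<exists>i. u = map w [i..<i + length u])"

definition overlap_free :: "iword \<Rightarrow> bool" where
  "overlap_free w \<longleftrightarrow> (\<forall>u. factor_of u w \<longrightarrow> \<not> is_overlap u)"

definition OF :: "iword set" where
  "OF = {w. overlap_free w}"

definition cons_w :: "bool \<Rightarrow> iword \<Rightarrow> iword" where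
  "cons_w a w = (\<lambda>n. case n of 0 \<Rightarrow> a | Suc m \<Rightarrow> w m)"

definition begins_with :: "iword \<Rightarrow> bool list \<Rightarrow> bool" where
  "begins_with w u \<longleftrightarrow> (\<forall>i<length u. w i = u ! i)"

definition setA :: "iword set" where "setA = OF"
definition setB :: "iword set" where "setB = {x. cons_w True x \<in> OF}"
definition setC :: "iword set" where
  "setC = {x. cons_w True x \<in> OF \<and> begins_with x [True, False, True]}"
definition setD :: "iword set" where "setD = {x. cons_w False x \<in> OF}"
definition setE :: "iword set" where
  "setE = {x. cons_w False x \<in> OF \<and> begins_with x [False, True, False]}"
definition setF :: "iword set" where
  "setF = {x. cons_w False x \<in> OF \<and> begins_with x [True, True]}"
definition setG :: "iword set" where
  "setG = {x. cons_w False x \<in> OF \<and> begins_with x [True]}"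
definition setH :: "iword set" where
  "setH = {x. cons_w True x \<in> OF \<and> begins_with x [True]}"
definition setI :: "iword set" where
  "setI = {x. cons_w True x \<in> OF \<and> begins_with x [False, False]}"
definition setJ :: "iword set" where
  "setJ = {x. cons_w True x \<in> OF \<and> begins_with x [False]}"
definition setK :: "iword set" where
  "setK = {x. cons_w False x \<in> OF \<and> begins_with x [False]}"

end

theory Submission
  imports Defs
begin

fun tm :: "nat \<Rightarrow> bool" where
  "tm n = (if n = 0 then False else (tm (n div 2) \<noteq> odd n))"
declare tm.simps[simp del]

lemma tm0[simp]: "tm 0 = False" by (simp add: tm.simps)
lemma tm_even: "tm (2*m) = tm m"
  by (cases "m = 0") (simp_all add: tm.simps[of "2*m"])
lemma tm_odd: "tm (2*m+1) = (\<not> tm m)"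
proof -
  have "tm (Suc (2*m)) = (\<not> tm m)" by (subst tm.simps) simp
  then show ?thesis by simp
qed
lemma tm_Suc2: "tm (Suc (2*m)) = (\<not> tm m)" using tm_odd by simp

lemma tm_add: "a < 2^m \<Longrightarrow> tm (a + 2^m*b) = (tm a \<noteq> tm b)"
proof (induction m arbitrary: a)
  case 0 then show ?case by simp
next
  case (Suc m)
  obtain q r where a: "a = 2*q + r" "r < 2" by (metis div_mod_decomp mod_less_divisor zero_less_numeral mult.commute)
  have q: "q < 2^m" using Suc.prems a by auto
  show ?case
  proof (cases "r = 0")
    case True
    have "a + 2^Suc m * b = 2*(q + 2^m*b)" using a True by simp
    then show ?thesis using Suc.IH[OF q] a True by (metis tm_even add_0_right)
  next
    case False
    then have r: "r = 1" using a by simp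
    have "a + 2^Suc m * b = 2*(q + 2^m*b) + 1" using a r by simp
    then show ?thesis using Suc.IH[OF q] a r by (metis tm_odd)
  qed
qed

lemma tm_pair: "tm (2*m) \<noteq> tm (2*m+1)" by (simp add: tm_even tm_Suc2)

lemma no_per1: "\<not> (tm i = tm (i+1) \<and> tm (i+1) = tm (i+2))"
proof (cases "even i")
  case True then obtain m where "i = 2*m" by auto
  then show ?thesis using tm_pair[of m] by auto
next
  case False then obtain m where "i = 2*m+1" using oddE by blast
  then show ?thesis using tm_pair[of "m+1"] by (auto simp: algebra_simps)
qed

lemma no_overlap_tm: "p \<ge> 1 \<Longrightarrow> \<not> (\<forall>k\<le>p. tm (i+k) = tm (i+k+p))"
proof (induction p arbitrary: i rule: less_induct)
  case (less p)
  show ?case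
  proof
    assume H: "\<forall>k\<le>p. tm (i+k) = tm (i+k+p)"
    show False
    proof (cases "p = 1")
      case True
      then show False using H[rule_format, of 0] H[rule_format, of 1] no_per1[of i] by auto
    next
      case p1: False
      show False
      proof (cases "even p")
        case True
        then obtain q where pq: "p = 2*q" by auto
        have q1: "q \<ge> 1" "q < p" using pq less.prems by auto
        have "\<forall>k\<le>q. tm (i div 2 + k) = tm (i div 2 + k + q)"
        proof (intro allI impI)
          fix k assume k: "k \<le> q"
          show "tm (i div 2 + k) = tm (i div 2 + k + q)"
          proof (cases "even i")
            case True
            then obtain m where m: "i = 2*m" by auto
            have "tm (i + 2*k) = tm (i + 2*k + p)" using H k pq by auto
            moreover have "i + 2*k = 2*(m+k)" "i + 2*k + p = 2*(m+k+q)" using m pq by auto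
            ultimately show ?thesis using m by (metis tm_even add_mult_distrib2 nonzero_mult_div_cancel_left zero_neq_numeral)
          next
            case False
            then obtain m where m: "i = 2*m+1" using oddE by blast
            show ?thesis
            proof (cases "k = 0")
              case True
              have h0: "tm i = tm (i + p)" using H by (metis add_0_right zero_le)
              have e0: "i + p = Suc (2*(m+q))" using m pq by simp
              have e1: "tm i = (\<not> tm m)" using m tm_Suc2 by simp
              have e2: "tm (i+p) = (\<not> tm (m+q))" by (simp only: e0 tm_Suc2)
              have "i div 2 = m" using m by simp
              then show ?thesis using True e1 e2 h0 by simp
            next
              case False
              have "tm (i + (2*k-1)) = tm (i + (2*k-1) + p)" using H k pq by auto
              moreover have "i + (2*k-1) = 2*(m+k)" "i + (2*k-1) + p = 2*(m+k+q)" using m pq False by auto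
              moreover have "i div 2 = m" using m by simp
              ultimately show ?thesis by (metis tm_even add.assoc)
            qed
          qed
        qed
        then show False using less.IH[OF q1(2) q1(1)] by blast
      next
        case False
        then have p3: "p \<ge> 3" using less.prems p1 by presburger
        have alt: "tm x \<noteq> tm (x+1)" if x: "i \<le> x" "x < i + p" for x
        proof (cases "even x")
          case True then obtain m where "x = 2*m" by auto
          then show ?thesis using tm_pair[of m] by auto
        next
          case oddx: False
          have "even (x + p)" using oddx False by auto
          then obtain m where m: "x + p = 2*m" by (rule evenE)
          have "tm x = tm (x+p)" using H[rule_format, of "x - i"] x by auto
          moreover have "tm (x+1) = tm (x+1+p)" using H[rule_format, of "x + 1 - i"] x by auto
          moreover have "x+1+p = 2*m+1" using m by auto
          ultimately show ?thesis using tm_pair[of m] m by auto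
        qed
        have alt2: "tm x \<noteq> tm (x+1)" if x: "i \<le> x" "x < i + 2*p" for x
        proof (cases "x < i + p")
          case True then show ?thesis using alt x by auto
        next
          case False
          have "tm (x - p) \<noteq> tm (x - p + 1)" using alt[of "x-p"] x False by auto
          moreover have "tm (x-p) = tm x" using H[rule_format, of "x - p - i"] x False by auto
          moreover have "tm (x-p+1) = tm (x+1)"
          proof -
            have hk: "x - p + 1 - i \<le> p" using x False by auto
            have "tm (i + (x-p+1-i)) = tm (i + (x-p+1-i) + p)" using H hk by blast
            moreover have "i + (x-p+1-i) = x - p + 1" "i + (x-p+1-i) + p = x+1" using x False by auto
            ultimately show ?thesis by simp
          qed
          ultimately show ?thesis by auto
        qed
        obtain y where y: "even y" "i \<le> y" "y \<le> i + 1"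
        proof (cases "even i")
          case True then show ?thesis using that[of i] by auto
        next
          case False then show ?thesis using that[of "i+1"] by auto
        qed
        then obtain m where m: "y = 2*m" by auto
        have a0: "tm (y+j) \<noteq> tm (y+j+1)" if "j < 4" for j using alt2[of "y+j"] y p3 that by auto
        have a1: "tm y = tm (y+2)" "tm (y+2) = tm (y+4)"
          using a0[of 0] a0[of 1] a0[of 2] a0[of 3] by (auto simp: numeral_eq_Suc)
        have "y + 2 = 2*(m+1)" "y + 4 = 2*(m+2)" using m by auto
        then have "tm m = tm (m+1) \<and> tm (m+1) = tm (m+2)" using a1 m
          by (metis tm_even)
        then show False using no_per1 by blast
      qed
    qed
  qed
qed


definition A :: "(nat \<Rightarrow> bool) \<Rightarrow> nat \<Rightarrow> nat" where
  "A s k = (\<Sum>i<k. if s i then 2^(2*i+1) else 0)"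
definition w :: "(nat \<Rightarrow> bool) \<Rightarrow> iword" where
  "w s n = (tm (n + A s n) \<noteq> tm (A s n))"
definition pad :: "(nat \<Rightarrow> bool) \<Rightarrow> nat \<Rightarrow> bool" where
  "pad s i = (3 \<le> i \<and> s (i - 3))"
definition W :: "nat \<Rightarrow> bool \<Rightarrow> (nat \<Rightarrow> bool) \<Rightarrow> iword" where
  "W c b s n = (w (pad s) (n + c) \<noteq> b)"

lemma A_Suc: "A s (Suc k) = A s k + (if s k then 2^(2*k+1) else 0)"
  by (simp add: A_def)

lemma A_lt: "A s j < 2^(2*j)"
proof (induction j)
  case 0 then show ?case by (simp add: A_def)
next
  case (Suc j)
  have "A s (Suc j) \<le> A s j + 2^(2*j+1)" by (simp add: A_Suc)
  also have "\<dots> < 2^(2*j) + 2^(2*j+1)" using Suc by simp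
  also have "\<dots> \<le> 2^(2*Suc j)" by simp
  finally show ?case .
qed

lemma A_decomp: "j \<le> k \<Longrightarrow> \<exists>C. A s k = A s j + 2^(2*j+1)*C"
proof (induction k rule: dec_induct)
  case base then show ?case by (rule exI[of _ 0]) simp
next
  case (step k)
  then obtain C where C: "A s k = A s j + 2^(2*j+1)*C" by blast
  have e: "(2::nat)^(2*k+1) = 2^(2*j+1) * 2^(2*(k-j))" using step(1)
    by (simp add: power_add[symmetric])
  show ?case
  proof (cases "s k")
    case True
    then have "A s (Suc k) = A s j + 2^(2*j+1)*(C + 2^(2*(k-j)))"
      using C e by (simp add: A_Suc algebra_simps)
    then show ?thesis by blast
  next
    case False
    then show ?thesis using C by (simp add: A_Suc)
  qed
qed

lemma w_stable: "n \<le> k \<Longrightarrow> w s n = (tm (n + A s k) \<noteq> tm (A s k))"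
proof -
  assume nk: "n \<le> k"
  obtain C where C: "A s k = A s n + 2^(2*n+1)*C" using A_decomp[OF nk] by blast
  have n1: "n < 2^(2*n)"
    by (metis less_exp order_less_le_trans mult_2 power_increasing le_add1 one_le_numeral)
  have a1: "n + A s n < 2^(2*n+1)" using n1 A_lt[of s n] by simp
  have a2: "A s n < 2^(2*n+1)" using A_lt[of s n] by simp
  have "tm (n + A s k) = (tm (n + A s n) \<noteq> tm C)"
    using tm_add[OF a1, of C] C by (simp add: add.assoc)
  moreover have "tm (A s k) = (tm (A s n) \<noteq> tm C)" using tm_add[OF a2, of C] C by simp
  ultimately show ?thesis by (auto simp: w_def)
qed

lemma tm1: "tm 1 = True" using tm_Suc2[of 0] by simp
lemma tm2: "tm 2 = True" using tm_even[of 1] tm1 by simp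

lemma w_bit: "w t (2^(2*m+1)) = (\<not> t m)"
proof -
  define N :: nat where "N = 2^(2*m+1)"
  have mN: "Suc m \<le> N" unfolding N_def
    by (metis Suc_leI less_exp order_less_le_trans power_increasing le_add2 one_le_numeral mult_2 le_add1 add.commute)
  obtain C where C: "A t N = A t (Suc m) + 2^(2*Suc m+1)*C" using A_decomp[OF mN] by blast
  define \<alpha> where "\<alpha> = A t m"
  have al: "\<alpha> < 2^(2*m)" using A_lt unfolding \<alpha>_def by blast
  have al1: "\<alpha> < 2^(2*m+1)" using al by (simp add: order_less_le_trans)
  have w: "w t N = (tm (N + A t N) \<noteq> tm (A t N))" by (simp add: w_def)
  have tal: "tm (\<alpha> + 2^(2*m+1)) = (\<not> tm \<alpha>)" using tm_add[OF al1, of 1] tm1 by simp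
  have tal2: "tm (\<alpha> + 2^(2*m+2)) = (\<not> tm \<alpha>)"
  proof -
    have "tm (\<alpha> + 2^(2*m+1)*2) = (\<not> tm \<alpha>)" using tm_add[OF al1, of 2] tm2 by simp
    moreover have "(2::nat)^(2*m+1)*2 = 2^(2*m+2)" by simp
    ultimately show ?thesis by simp
  qed
  have big: "x < 2^(2*Suc m+1) \<Longrightarrow> tm (x + 2^(2*Suc m+1)*C) = (tm x \<noteq> tm C)" for x
    using tm_add by blast
  show ?thesis
  proof (cases "t m")
    case True
    have As: "A t (Suc m) = \<alpha> + N" using True by (simp add: A_Suc \<alpha>_def N_def)
    have b1: "\<alpha> + N < 2^(2*Suc m+1)" using al1 unfolding N_def by simp
    have b2: "\<alpha> + 2^(2*m+2) < 2^(2*Suc m+1)" using al1 by simp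
    have "N + A t N = (\<alpha> + 2^(2*m+2)) + 2^(2*Suc m+1)*C" using C As unfolding N_def by simp
    then have "tm (N + A t N) = (\<not> tm \<alpha> \<noteq> tm C)" using big[OF b2] tal2 by simp
    moreover have "tm (A t N) = (\<not> tm \<alpha> \<noteq> tm C)" using big[OF b1] C As tal N_def by simp
    ultimately show ?thesis using w True unfolding N_def by simp
  next
    case False
    have As: "A t (Suc m) = \<alpha>" using False by (simp add: A_Suc \<alpha>_def)
    have b1: "\<alpha> < 2^(2*Suc m+1)" using al1 by simp
    have b2: "\<alpha> + N < 2^(2*Suc m+1)" using al1 unfolding N_def by simp
    have e: "N + A t N = (\<alpha> + N) + 2^(2*Suc m+1)*C" using C As by simp
    have "tm (N + A t N) = (tm (\<alpha> + N) \<noteq> tm C)" unfolding e using big[OF b2] .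
    then have "tm (N + A t N) = (\<not> tm \<alpha> \<noteq> tm C)" using tal unfolding N_def by simp
    moreover have "tm (A t N) = (tm \<alpha> \<noteq> tm C)" using big[OF b1] C As by simp
    ultimately show ?thesis using w False unfolding N_def by simp
  qed
qed


lemma overlap_nth:
  assumes u: "u = [a] @ x @ [a] @ x @ [a]" and k: "k \<le> length x + 1"
  shows "u ! k = u ! (k + (length x + 1))"
proof (cases "k \<le> length x")
  case True
  show ?thesis
  proof (cases k)
    case 0 then show ?thesis using u by (simp add: nth_append)
  next
    case (Suc k') then show ?thesis using u True by (simp add: nth_append)
  qed
next
  case False
  then have "k = length x + 1" using k by simp
  then show ?thesis using u by (simp add: nth_append)
qed

lemma OF_from_per:
  assumes H: "\<And>i p. p \<ge> 1 \<Longrightarrow> \<not> (\<forall>k\<le>p. f (i+k) = f (i+k+p))"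
  shows "f \<in> OF"
  unfolding OF_def overlap_free_def
proof (clarify)
  fix u assume fu: "factor_of u f" and ov: "is_overlap u"
  obtain i where ui: "u = map f [i..<i + length u]" using fu factor_of_def by blast
  obtain a x where ax: "u = [a] @ x @ [a] @ x @ [a]" using ov is_overlap_def by blast
  define p where "p = length x + 1"
  have lu: "length u = 2*p+1" using ax p_def by simp
  have unth: "u ! j = f (i + j)" if "j < length u" for j
  proof -
    define L where "L = length u"
    have uL: "u = map f [i..<i+L]" using ui L_def by simp
    have jL: "j < L" using that L_def by simp
    have "map f [i..<i+L] ! j = f (i + j)" using jL by simp
    then show ?thesis using uL by simp
  qed
  have "\<forall>k\<le>p. f (i+k) = f (i+k+p)"
  proof (intro allI impI)
    fix k assume k: "k \<le> p"
    have "u ! k = u ! (k + p)" using overlap_nth[OF ax, of k] k p_def by simp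
    moreover have "u ! k = f (i+k)" "u ! (k+p) = f (i+k+p)" using unth[of k] unth[of "k+p"] lu k by (simp_all add: add.assoc)
    ultimately show "f (i+k) = f (i+k+p)" by simp
  qed
  then show False using H[of p i] p_def by simp
qed



lemma W_OF: "W c b s \<in> OF"
proof (rule OF_from_per)
  fix i p :: nat assume p: "p \<ge> 1"
  show "\<not> (\<forall>k\<le>p. W c b s (i+k) = W c b s (i+k+p))"
  proof
    assume H: "\<forall>k\<le>p. W c b s (i+k) = W c b s (i+k+p)"
    define K where "K = i + c + 2*p"
    define a where "a = A (pad s) K"
    have wn: "W c b s n = ((tm (n + c + a) \<noteq> tm a) \<noteq> b)" if "n \<le> i + 2*p" for n
      using w_stable[of "n+c" K "pad s"] that unfolding W_def a_def K_def by simp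
    have "\<forall>k\<le>p. tm (i + c + a + k) = tm (i + c + a + k + p)"
    proof (intro allI impI)
      fix k assume k: "k \<le> p"
      have "W c b s (i+k) = W c b s (i+k+p)" using H k by blast
      then have "tm (i + k + c + a) = tm (i + k + p + c + a)" using wn[of "i+k"] wn[of "i+k+p"] k by auto
      then show "tm (i + c + a + k) = tm (i + c + a + k + p)" by (simp add: algebra_simps)
    qed
    then show False using no_overlap_tm[OF p] by blast
  qed
qed

lemma A_pad3: "A (pad s) 3 = 0"
  by (simp add: A_def pad_def numeral_eq_Suc lessThan_Suc)

lemma W_prefix: "n + c < 128 \<Longrightarrow> W c b s n = (tm (n + c) \<noteq> b)"
proof -
  assume nc: "n + c < 128"
  define m where "m = n + c"
  have m3: "3 \<le> m + 3" by simp
  obtain C where C: "A (pad s) (m+3) = 2^7 * C" using A_decomp[OF m3, of "pad s"] A_pad3 by auto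
  have "w (pad s) m = (tm (m + A (pad s) (m+3)) \<noteq> tm (A (pad s) (m+3)))" using w_stable by simp
  also have "\<dots> = tm m" using tm_add[of m 7 C] tm_add[of 0 7 C] C nc m_def by auto
  finally show ?thesis unfolding W_def m_def by simp
qed

lemma W_inj: "c < 128 \<Longrightarrow> inj (W c b)"
proof (rule injI)
  fix s s' assume c: "c < 128" and eq: "W c b s = W c b s'"
  show "s = s'"
  proof (rule ccontr)
    assume "s \<noteq> s'"
    then obtain i where i: "s i \<noteq> s' i" by blast
    define N :: nat where "N = 2^(2*(i+3)+1)"
    have "(128::nat) \<le> N" unfolding N_def
      using power_increasing[of 7 "2*(i+3)+1" "2::nat"] by simp
    then have NN: "N - c + c = N" using c by simp
    have "W c b s (N - c) = W c b s' (N - c)" using eq by simp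
    then have "w (pad s) N = w (pad s') N" unfolding W_def NN by auto
    then show False using w_bit[of "pad s" "i+3"] w_bit[of "pad s'" "i+3"] i
      unfolding N_def by (simp add: pad_def)
  qed
qed

lemma W_cons: "c < 127 \<Longrightarrow> cons_w (tm c \<noteq> b) (W (Suc c) b s) = W c b s"
proof
  fix n assume c: "c < 127"
  show "cons_w (tm c \<noteq> b) (W (Suc c) b s) n = W c b s n"
  proof (cases n)
    case 0 then show ?thesis using W_prefix[of 0 c b s] c by (simp add: cons_w_def)
  next
    case (Suc m) then show ?thesis by (simp add: cons_w_def W_def)
  qed
qed

lemma uncountable_fun: "uncountable (UNIV :: (nat \<Rightarrow> bool) set)"
  unfolding uncountable_def
proof (intro conjI notI)
  show "UNIV = {} \<Longrightarrow> False" by simp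
  assume "\<exists>f :: nat \<Rightarrow> nat \<Rightarrow> bool. range f = UNIV"
  then obtain f :: "nat \<Rightarrow> nat \<Rightarrow> bool" where f: "range f = UNIV" by blast
  then obtain n where "(\<lambda>k. \<not> f k k) = f n" by (metis UNIV_I imageE)
  then show False by (metis)
qed

lemma W_unc: "c < 128 \<Longrightarrow> uncountable (range (W c b))"
  using countable_image_inj_on W_inj uncountable_fun by blast

lemma tmvals: "tm 13 = True" "tm 14 = True" "tm 15 = False" "tm 16 = True"
  by code_simp+

lemma unc_sub: "uncountable X \<Longrightarrow> X \<subseteq> Y \<Longrightarrow> uncountable Y"
  using countable_subset by blast

lemma tm2s: "tm (Suc (Suc 0)) = True" using tm2 by (simp add: numeral_2_eq_2)
lemma bw3: "begins_with x [a,b,c] \<longleftrightarrow> x 0 = a \<and> x 1 = b \<and> x 2 = c"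
proof
  assume H: "begins_with x [a,b,c]"
  show "x 0 = a \<and> x 1 = b \<and> x 2 = c"
    using H[unfolded begins_with_def, rule_format, of 0] H[unfolded begins_with_def, rule_format, of 1]
      H[unfolded begins_with_def, rule_format, of 2] by simp
next
  assume H: "x 0 = a \<and> x 1 = b \<and> x 2 = c"
  show "begins_with x [a,b,c]" unfolding begins_with_def
  proof (intro allI impI)
    fix i assume "i < length [a,b,c]"
    then have "i = 0 \<or> i = 1 \<or> i = 2" by auto
    then show "x i = [a,b,c] ! i" using H by auto
  qed
qed
lemma bw2: "begins_with x [a,b] \<longleftrightarrow> x 0 = a \<and> x 1 = b"
proof
  assume H: "begins_with x [a,b]"
  show "x 0 = a \<and> x 1 = b"
    using H[unfolded begins_with_def, rule_format, of 0] H[unfolded begins_with_def, rule_format, of 1] by simp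
next
  assume H: "x 0 = a \<and> x 1 = b"
  show "begins_with x [a,b]" unfolding begins_with_def
  proof (intro allI impI)
    fix i assume "i < length [a,b]"
    then have "i = 0 \<or> i = 1" by auto
    then show "x i = [a,b] ! i" using H by auto
  qed
qed

lemma memC: "W 14 False s \<in> setC"
proof -
  have "cons_w (tm 13 \<noteq> False) (W (Suc 13) False s) \<in> OF" using W_cons[of 13 False s] W_OF by simp
  then have o: "cons_w True (W 14 False s) \<in> OF" using tmvals by simp
  have a: "W 14 False s 0 = True" using W_prefix[of 0 14 False s] tmvals by simp
  have b: "W 14 False s 1 = False" using W_prefix[of 1 14 False s] tmvals by simp
  have c: "W 14 False s 2 = True" using W_prefix[of 2 14 False s] tmvals by simp
  have "begins_with (W 14 False s) [True, False, True]" unfolding bw3 using a b c by simp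
  then show ?thesis using o by (simp add: setC_def)
qed

lemma memE: "W 14 True s \<in> setE"
proof -
  have "cons_w (tm 13 \<noteq> True) (W (Suc 13) True s) \<in> OF" using W_cons[of 13 True s] W_OF by simp
  then have o: "cons_w False (W 14 True s) \<in> OF" using tmvals by simp
  have a: "W 14 True s 0 = False" using W_prefix[of 0 14 True s] tmvals by simp
  have b: "W 14 True s 1 = True" using W_prefix[of 1 14 True s] tmvals by simp
  have c: "W 14 True s 2 = False" using W_prefix[of 2 14 True s] tmvals by simp
  have "begins_with (W 14 True s) [False, True, False]" unfolding bw3 using a b c by simp
  then show ?thesis using o by (simp add: setE_def)
qed

lemma memF: "W 1 False s \<in> setF"
proof -
  have "cons_w (tm 0 \<noteq> False) (W (Suc 0) False s) \<in> OF" using W_cons[of 0 False s] W_OF by simp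
  then have o: "cons_w False (W 1 False s) \<in> OF" by simp
  have a: "W 1 False s 0 = True" using W_prefix[of 0 1 False s] tm1 by simp
  have b: "W 1 False s 1 = True" using W_prefix[of 1 1 False s] tm2s by simp
  have "begins_with (W 1 False s) [True, True]" unfolding bw2 using a b by simp
  then show ?thesis using o by (simp add: setF_def)
qed

lemma memI: "W 1 True s \<in> setI"
proof -
  have "cons_w (tm 0 \<noteq> True) (W (Suc 0) True s) \<in> OF" using W_cons[of 0 True s] W_OF by simp
  then have o: "cons_w True (W 1 True s) \<in> OF" by simp
  have a: "W 1 True s 0 = False" using W_prefix[of 0 1 True s] tm1 by simp
  have b: "W 1 True s 1 = False" using W_prefix[of 1 1 True s] tm2s by simp
  have "begins_with (W 1 True s) [False, False]" unfolding bw2 using a b by simp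
  then show ?thesis using o by (simp add: setI_def)
qed

theorem corollary4:
  shows "uncountable setA \<and> uncountable setB \<and> uncountable setC \<and> uncountable setD \<and>
         uncountable setE \<and> uncountable setF \<and> uncountable setG \<and> uncountable setH \<and>
         uncountable setI \<and> uncountable setJ \<and> uncountable setK"
proof -
  have C: "range (W 14 False) \<subseteq> setC" using memC by blast
  have E: "range (W 14 True) \<subseteq> setE" using memE by blast
  have F: "range (W 1 False) \<subseteq> setF" using memF by blast
  have I: "range (W 1 True) \<subseteq> setI" using memI by blast
  have A: "range (W 0 False) \<subseteq> setA" using W_OF by (auto simp: setA_def)
  have uC: "uncountable setC" using unc_sub[OF W_unc C] by simp
  have uE: "uncountable setE" using unc_sub[OF W_unc E] by simp
  have uF: "uncountable setF" using unc_sub[OF W_unc F] by simp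
  have uI: "uncountable setI" using unc_sub[OF W_unc I] by simp
  have uA: "uncountable setA" using unc_sub[OF W_unc A] by simp
  have "setC \<subseteq> setB" "setC \<subseteq> setH" "setE \<subseteq> setD" "setE \<subseteq> setK" "setF \<subseteq> setG" "setI \<subseteq> setJ"
    by (auto simp: setB_def setC_def setH_def setE_def setD_def setK_def setF_def setG_def
        setI_def setJ_def begins_with_def)
  then show ?thesis using uA uC uE uF uI unc_sub[of setC setB] unc_sub[of setC setH]
    unc_sub[of setE setD] unc_sub[of setE setK] unc_sub[of setF setG] unc_sub[of setI setJ] by blast
qed

end
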